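(* Let $Q$ be a non-empty finite set of primes, $d\ge1$ an integer, $\ell$ a positive odd integer, and $m:\mathbb Z_{>0}\to\mathbb R_{>0}$ a multiplicative function with $m(q)\le q-1$ and $m(q)\le d$ for all $q\in Q$. Let $Q(\ell)=\{r\in\mathcal D(\prod_{q\in Q}q):\omega(r)\le\ell\}$ and $W_m(Q)=\prod_{q\in Q}(1-\frac{m(q)}{q})$. Then $$\sum_{r\in Q(\ell)}\frac{\mu(r)\,m(r)}{r}\;\ge\;W_m(Q)\Big(1-\Big(\frac{e\,\alpha}{\ell}\Big)^{\ell}\alpha\, e^{\alpha}\Big),\qquad\text{where }\alpha=(d+1)^2(2+\ln\ln(|Q|+1)).$$
   Context: $\mathcal D(n)$ is the set of positive divisors of $n$; $\omega(r)$ is the number of distinct prime divisors of $r$; $\mu$ is the Möbius function (for square-free $r$, $\mu(r)=(-1)^{\omega(r)}$). A function $m$ is multiplicative if $m(ab)=m(a)m(b)$ for all coprime positive integers $a,b$. $e$ is Euler's number. *)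

theory Defs
  imports "HOL-Analysis.Analysis" "HOL-Computational_Algebra.Computational_Algebra"
begin

definition omega :: "nat \<Rightarrow> nat" where
  "omega r = card (prime_factors r)"

definition moebius :: "nat \<Rightarrow> int" where
  "moebius r = (if squarefree r then (-1) ^ omega r else 0)"

definition multiplicative :: "(nat \<Rightarrow> real) \<Rightarrow> bool" where
  "multiplicative m \<longleftrightarrow> (\<forall>a b. a > 0 \<longrightarrow> b > 0 \<longrightarrow> coprime a b \<longrightarrow> m (a * b) = m a * m b)"

end

theory Submission
  imports Defs
begin


lemma ln_ge_one_minus_inv: "x > 0 \<Longrightarrow> ln (x::real) \<ge> 1 - 1/x"
proof -
  assume x: "x > 0"
  have "ln (1/x) \<le> 1/x - 1" using x by (intro ln_le_minus_one) simp
  thus ?thesis using x by (simp add: ln_div)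
qed

lemma ln2_ge: "ln (2::real) \<ge> 7/12"
proof -
  have "ln (4/3::real) \<ge> 1/4" using ln_ge_one_minus_inv[of "4/3"] by simp
  moreover have "ln (3/2::real) \<ge> 1/3" using ln_ge_one_minus_inv[of "3/2"] by simp
  moreover have "ln (2::real) = ln (4/3) + ln (3/2)" using ln_mult[of "4/3::real" "3/2"] by simp
  ultimately show ?thesis by linarith
qed

lemma prod_primes_dvd:
  fixes B :: "nat set"
  assumes "finite B" "\<forall>p\<in>B. prime p" "\<forall>p\<in>B. p dvd n"
  shows "\<Prod>B dvd n"
  using assms
proof (induction B rule: finite_induct)
  case empty then show ?case by simp
next
  case (insert p B)
  have "coprime p (\<Prod>B)"
    using insert by (intro prod_coprime_right) (auto intro: primes_coprime)
  then show ?case using insert by (simp add: divides_mult)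
qed

lemma block_bound:
  fixes A :: "nat set" and j :: nat
  assumes "\<forall>q\<in>A. prime q" "j \<ge> 1"
  shows "(\<Sum>q\<in>{q\<in>A. 2^j < q \<and> q \<le> 2^(j+1)}. 1 / real q) \<le> 2 / real j"
proof -
  define N :: nat where "N = 2^j"
  define B where "B = {q\<in>A. 2^j < q \<and> q \<le> 2^(j+1)}"
  have finB: "finite B" unfolding B_def by (rule finite_subset[of _ "{..2^(j+1)}"]) auto
  have Bprime: "\<forall>p\<in>B. prime p" using assms unfolding B_def by auto
  have dv: "\<forall>p\<in>B. p dvd (2*N choose N)"
  proof
    fix p assume p: "p \<in> B"
    hence pr: "prime p" and pN: "N < p" "p \<le> 2*N" using Bprime unfolding B_def N_def by auto
    have "fact N * fact (2*N - N) * (2*N choose N) = (fact (2*N) :: nat)"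
      by (rule binomial_fact_lemma) simp
    moreover have "p dvd (fact (2*N) :: nat)" using pr pN by (simp add: prime_dvd_fact_iff)
    ultimately have "p dvd fact N * fact N * (2*N choose N)" by simp
    moreover have "\<not> p dvd (fact N :: nat)" using pr pN by (simp add: prime_dvd_fact_iff)
    ultimately show "p dvd (2*N choose N)" using pr by (auto simp: prime_dvd_mult_iff)
  qed
  have "\<Prod>B dvd (2*N choose N)" by (rule prod_primes_dvd[OF finB Bprime dv])
  hence "\<Prod>B \<le> (2*N choose N)" by (rule dvd_imp_le) (simp add: N_def)
  also have "\<dots> \<le> 2^(2*N)" by (rule binomial_le_pow2)
  finally have P1: "\<Prod>B \<le> 2^(2*N)" .
  have "(\<Prod>p\<in>B. N) \<le> (\<Prod>p\<in>B. p)"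
    by (rule prod_mono) (auto simp: B_def N_def)
  hence "N ^ card B \<le> \<Prod>B" by simp
  with P1 have "(2::nat)^(j * card B) \<le> 2^(2*N)" by (simp add: N_def power_mult)
  hence c: "j * card B \<le> 2*N" by simp
  have "(\<Sum>q\<in>B. 1 / real q) \<le> (\<Sum>q\<in>B. 1 / real N)"
    by (rule sum_mono) (auto simp: B_def N_def frac_le)
  also have "\<dots> = card B / real N" by simp
  also have "\<dots> \<le> 2 / real j"
  proof -
    have "real j * card B \<le> 2 * N" using c by (metis of_nat_le_iff of_nat_mult of_nat_numeral)
    moreover have "N > 0" by (simp add: N_def)
    ultimately show ?thesis using assms(2) by (simp add: field_simps)
  qed
  finally show ?thesis unfolding B_def .
qed

lemma ln3_ge: "ln (3::real) \<ge> 1"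
proof -
  have "exp 1 \<le> (3::real)" using e_less_272 by simp
  thus ?thesis by (subst ln_ge_iff) auto
qed

lemma small_odd_primes:
  fixes q :: nat assumes "prime q" "3 \<le> q" "q \<le> 16"
  shows "q \<in> {3,5,7,11,13}"
proof -
  have "q = 3 \<or> q = 4 \<or> q = 5 \<or> q = 6 \<or> q = 7 \<or> q = 8 \<or> q = 9 \<or> q = 10 \<or> q = 11 \<or> q = 12
     \<or> q = 13 \<or> q = 14 \<or> q = 15 \<or> q = 16" using assms(2,3) by presburger
  moreover have "\<not> prime (4::nat)" using prime_product[of 2 "2::nat"] by simp
  moreover have "\<not> prime (6::nat)" using prime_product[of 2 "3::nat"] by simp
  moreover have "\<not> prime (8::nat)" using prime_product[of 2 "4::nat"] by simp
  moreover have "\<not> prime (10::nat)" using prime_product[of 2 "5::nat"] by simp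
  moreover have "\<not> prime (12::nat)" using prime_product[of 2 "6::nat"] by simp
  moreover have "\<not> prime (14::nat)" using prime_product[of 2 "7::nat"] by simp
  moreover have "\<not> prime (16::nat)" using prime_product[of 2 "8::nat"] by simp
  moreover have "\<not> prime (9::nat)" using prime_product[of 3 "3::nat"] by simp
  moreover have "\<not> prime (15::nat)" using prime_product[of 3 "5::nat"] by simp
  ultimately show ?thesis using assms(1) by auto
qed

lemma T_bound:
  fixes A :: "nat set"
  assumes Ap: "\<forall>q\<in>A. prime q \<and> q \<ge> 3" and J: "J \<ge> 3"
  shows "(\<Sum>q\<in>{q\<in>A. q \<le> 2^(J+1)}. 1 / real q) \<le> (1/3+1/5+1/7+1/11+1/13) + 2 * ln (real J / 3)"
  using J
proof (induction J rule: nat_induct_at_least)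
  case base
  have sub: "{q\<in>A. q \<le> 2^(3+1)} \<subseteq> {3,5,7,11,13}"
    using Ap small_odd_primes by auto
  have "(\<Sum>q\<in>{q\<in>A. q \<le> 2^(3+1)}. 1 / real q) \<le> (\<Sum>q\<in>{3,5,7,11,13::nat}. 1 / real q)"
    by (rule sum_mono2[OF _ sub]) auto
  also have "\<dots> = 1/3+1/5+1/7+1/11+1/13" by simp
  finally show ?case by simp
next
  case (Suc J)
  have fin: "finite {q\<in>A. q \<le> 2^(J+1)}" by (rule finite_subset[of _ "{..2^(J+1)}"]) auto
  have fin2: "finite {q\<in>A. 2^(J+1) < q \<and> q \<le> 2^(J+1+1)}" by (rule finite_subset[of _ "{..2^(J+2)}"]) auto
  have eq: "{q\<in>A. q \<le> 2^(Suc J+1)} = {q\<in>A. q \<le> 2^(J+1)} \<union> {q\<in>A. 2^(J+1) < q \<and> q \<le> 2^(J+1+1)}"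
    by auto
  have "(\<Sum>q\<in>{q\<in>A. q \<le> 2^(Suc J+1)}. 1 / real q) =
        (\<Sum>q\<in>{q\<in>A. q \<le> 2^(J+1)}. 1 / real q) + (\<Sum>q\<in>{q\<in>A. 2^(J+1) < q \<and> q \<le> 2^(J+1+1)}. 1 / real q)"
    unfolding eq by (rule sum.union_disjoint[OF fin fin2]) auto
  also have "\<dots> \<le> ((1/3+1/5+1/7+1/11+1/13) + 2 * ln (real J / 3)) + 2 / real (J+1)"
    using Suc.IH block_bound[of A "J+1"] Ap by (intro add_mono) auto
  also have "\<dots> \<le> (1/3+1/5+1/7+1/11+1/13) + 2 * ln (real (Suc J) / 3)"
  proof -
    have Jp: "real J > 0" using Suc.hyps by simp
    have "ln ((real J + 1) / real J) \<ge> 1 - real J / (real J + 1)"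
      using ln_ge_one_minus_inv[of "(real J + 1) / real J"] Jp by simp
    moreover have "1 - real J / (real J + 1) = 1 / (real J + 1)" using Jp by (simp add: field_simps)
    moreover have "ln (real (Suc J) / 3) = ln (real J / 3) + ln ((real J + 1) / real J)"
    proof -
      have "real J / 3 * ((real J + 1) / real J) = real (Suc J) / 3" using Jp by (simp add: field_simps)
      thus ?thesis using ln_mult[of "real J / 3" "(real J + 1) / real J"] Jp by (simp add: add.commute)
    qed
    ultimately show ?thesis by (simp add: field_simps)
  qed
  finally show ?case .
qed

lemma R_crude:
  fixes A :: "nat set"
  assumes fin: "finite A" and Ap: "\<forall>q\<in>A. prime q \<and> q \<ge> 3" and ne: "A \<noteq> {}"
  shows "(\<Sum>q\<in>A. 1 / real q) \<le> 1/3 + (real (card A) - 1) / 5"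
proof -
  have ge5: "q \<ge> 5" if "q \<in> A" "q \<noteq> 3" for q
  proof -
    have "prime q" "q \<ge> 3" using Ap that by auto
    moreover have "q \<noteq> 4" using prime_product[of 2 "2::nat"] \<open>prime q\<close> by auto
    ultimately show ?thesis using that by linarith
  qed
  have b: "(\<Sum>q\<in>A-{3}. 1 / real q) \<le> real (card (A - {3})) / 5"
  proof -
    have "(\<Sum>q\<in>A-{3}. 1 / real q) \<le> (\<Sum>q\<in>A-{3}. 1 / 5)"
    proof (rule sum_mono)
      fix q assume "q \<in> A - {3}"
      hence "real q \<ge> 5" using ge5 by auto
      thus "1 / real q \<le> 1 / 5" by (simp add: frac_le)
    qed
    thus ?thesis by simp
  qed
  show ?thesis
  proof (cases "3 \<in> A")
    case True
    have "(\<Sum>q\<in>A. 1 / real q) = 1/3 + (\<Sum>q\<in>A-{3}. 1 / real q)"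
      using True fin by (simp add: sum.remove)
    moreover have "card (A - {3}) = card A - 1" using True fin by simp
    moreover have "card A \<ge> 1" using ne fin by (simp add: Suc_leI card_gt_0_iff)
    ultimately show ?thesis using b by (simp add: of_nat_diff)
  next
    case False
    hence "A - {3} = A" by simp
    moreover have "card A \<ge> 1" using ne fin by (simp add: Suc_leI card_gt_0_iff)
    ultimately have "(\<Sum>q\<in>A. 1 / real q) \<le> real (card A) / 5" using b by simp
    moreover have "real (card A) / 5 \<le> 1/3 + (real (card A) - 1) / 5" by (simp add: field_simps)
    ultimately show ?thesis by linarith
  qed
qed

lemma R_main:
  fixes A :: "nat set"
  assumes fin: "finite A" and Ap: "\<forall>q\<in>A. prime q \<and> q \<ge> 3" and cA: "card A \<le> n" and n2: "n \<ge> 2"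
  shows "(\<Sum>q\<in>A. 1 / real q) \<le> 1 + 2 * ln (ln (real n + 1))"
proof -
  have ln1: "ln (real n + 1) \<ge> 1"
  proof -
    have "ln (real n + 1) \<ge> ln 3" using n2 by simp
    thus ?thesis using ln3_ge by linarith
  qed
  hence lnln0: "ln (ln (real n + 1)) \<ge> 0" by simp
  have cAr: "real (card A) \<le> real n" using cA by simp
  show ?thesis
  proof (cases "A = {}")
    case True thus ?thesis using lnln0 by simp
  next
    case ne: False
    note crude = R_crude[OF fin Ap ne]
    show ?thesis
    proof (cases "n \<le> 4")
      case True
      hence "real n \<le> 4" by simp
      hence "1/3 + (real (card A) - 1) / 5 \<le> 1" using cAr by (simp add: field_simps)
      thus ?thesis using crude lnln0 by linarith
    next
      case n4: False
      show ?thesis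
      proof (cases "n \<le> 8")
        case True
        hence "real n \<le> 8" by simp
        hence c1: "1/3 + (real (card A) - 1) / 5 \<le> 26/15" using cAr by (simp add: field_simps)
        have "ln (real n + 1) \<ge> ln 6" using n4 by simp
        moreover have "ln (6::real) = ln 2 + ln 3" using ln_mult[of "2::real" 3] by simp
        ultimately have "ln (real n + 1) \<ge> 19/12" using ln2_ge ln3_ge by linarith
        hence "ln (ln (real n + 1)) \<ge> ln (19/12)" by (intro ln_mono) auto
        moreover have "ln (19/12::real) \<ge> 7/19" using ln_ge_one_minus_inv[of "19/12"] by simp
        ultimately have "ln (ln (real n + 1)) \<ge> 7/19" by linarith
        thus ?thesis using crude c1 by linarith
      next
        case n8: False
        obtain J where J1: "2^J \<le> n - 1" and J2: "n - 1 < 2^(J+1)"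
        proof -
          have "n - 1 \<ge> 1" using n2 by simp
          from ex_power_ivl1[of 2 "n-1", OF _ this] show ?thesis using that by auto
        qed
        have Jn: "2^J < n" and Jn2: "n \<le> 2^(J+1)" using J1 J2 n2 by auto
        have J3: "J \<ge> 3"
        proof (rule ccontr)
          assume "\<not> J \<ge> 3"
          hence "J + 1 \<le> 3" by simp
          hence "(2::nat)^(J+1) \<le> 2^3" by (rule power_increasing) simp
          thus False using Jn2 n8 by simp
        qed
        have fin1: "finite {q\<in>A. q \<le> 2^(J+1)}" using fin by simp
        have fin2: "finite {q\<in>A. \<not> q \<le> 2^(J+1)}" using fin by simp
        have Aeq: "A = {q\<in>A. q \<le> 2^(J+1)} \<union> {q\<in>A. \<not> q \<le> 2^(J+1)}" by auto
        have "(\<Sum>q\<in>A. 1 / real q) = (\<Sum>q\<in>{q\<in>A. q \<le> 2^(J+1)}. 1 / real q) + (\<Sum>q\<in>{q\<in>A. \<not> q \<le> 2^(J+1)}. 1 / real q)"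
          by (subst Aeq, rule sum.union_disjoint[OF fin1 fin2]) auto
        also have "\<dots> \<le> ((1/3+1/5+1/7+1/11+1/13) + 2 * ln (real J / 3)) + 1"
        proof (rule add_mono)
          show "(\<Sum>q\<in>{q\<in>A. q \<le> 2^(J+1)}. 1 / real q) \<le> (1/3+1/5+1/7+1/11+1/13) + 2 * ln (real J / 3)"
            by (rule T_bound[OF Ap J3])
          have "(\<Sum>q\<in>{q\<in>A. \<not> q \<le> 2^(J+1)}. 1 / real q) \<le> (\<Sum>q\<in>{q\<in>A. \<not> q \<le> 2^(J+1)}. 1 / 2^(J+1))"
          proof (rule sum_mono)
            fix q assume "q \<in> {q\<in>A. \<not> q \<le> 2^(J+1)}"
            hence "2^(J+1) < q" by (simp add: not_le)
            hence "real (2^(J+1)) < real q" by (simp only: of_nat_less_iff)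
            hence "real q \<ge> 2^(J+1)" by simp
            moreover have "(0::real) < 2^(J+1)" by simp
            ultimately show "1 / real q \<le> 1 / 2^(J+1)" by (simp add: frac_le)
          qed
          also have "\<dots> = real (card {q\<in>A. \<not> q \<le> 2^(J+1)}) / 2^(J+1)" by simp
          also have "\<dots> \<le> 1"
          proof -
            have "card {q\<in>A. \<not> q \<le> 2^(J+1)} \<le> card A" using fin by (intro card_mono) auto
            hence "card {q\<in>A. \<not> q \<le> 2^(J+1)} \<le> 2^(J+1)" using cA Jn2 by linarith
            hence "real (card {q\<in>A. \<not> q \<le> 2^(J+1)}) \<le> real (2^(J+1))"
              by (simp only: of_nat_le_iff)
            hence "real (card {q\<in>A. \<not> q \<le> 2^(J+1)}) \<le> 2^(J+1)" by simp
            thus ?thesis by simp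
          qed
          finally show "(\<Sum>q\<in>{q\<in>A. \<not> q \<le> 2^(J+1)}. 1 / real q) \<le> 1" .
        qed
        also have "\<dots> \<le> 1 + 2 * ln (ln (real n + 1))"
        proof -
          have Jp: "real J > 0" using J3 by simp
          have "real (2^J) \<le> real n" using Jn by (simp only: of_nat_le_iff)
          moreover have "(2::real)^J = real (2^J)" by simp
          ultimately have "real n + 1 \<ge> 2^J" by linarith
          hence "ln (real n + 1) \<ge> ln (2^J)" by (intro ln_mono) auto
          moreover have "ln ((2::real)^J) = real J * ln 2" by (simp add: ln_realpow)
          moreover have "real J * ln 2 \<ge> real J * (7/12)" using ln2_ge Jp by (intro mult_left_mono) auto
          ultimately have "ln (real n + 1) \<ge> real J * (7/12)" by linarith
          hence "ln (ln (real n + 1)) \<ge> ln (real J * (7/12))" using Jp by (intro ln_mono) auto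
          moreover have "ln (real J * (7/12)) = ln (real J / 3) + ln (7/4)"
          proof -
            have "real J * (7/12) = (real J / 3) * (7/4)" by simp
            thus ?thesis using ln_mult[of "real J / 3" "7/4"] Jp by simp
          qed
          moreover have "ln (7/4::real) \<ge> 3/7" using ln_ge_one_minus_inv[of "7/4"] by simp
          ultimately have "ln (ln (real n + 1)) \<ge> ln (real J / 3) + 3/7" by linarith
          thus ?thesis by simp
        qed
        finally show ?thesis .
      qed
    qed
  qed
qed

lemma sum_q_minus_1: "(\<Sum>q\<in>{1..d::nat}. real q - 1) = real d * (real d - 1) / 2"
  by (induction d) (auto simp: field_simps)

lemma y_le_q1:
  fixes q :: nat and mq :: real
  assumes "0 < mq" "mq \<le> real q - 1"
  shows "mq / (real q - mq) \<le> real q - 1"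
proof -
  have "real q - mq \<ge> 1" using assms by simp
  hence "mq / (real q - mq) \<le> mq" using assms(1) by (simp add: divide_le_eq)
  thus ?thesis using assms by linarith
qed

lemma y_le_dq:
  fixes q d :: nat and mq :: real
  assumes "0 < mq" "mq \<le> real d" "d < q"
  shows "mq / (real q - mq) \<le> real d / (real q - real d)"
proof -
  have "real q - real d > 0" using assms by simp
  moreover have "real q - mq \<ge> real q - real d" using assms by simp
  ultimately show ?thesis using assms by (intro frac_le) auto
qed

lemma y_le_big:
  fixes q d :: nat
  assumes "2 * d < q" "d \<ge> 1"
  shows "real d / (real q - real d) \<le> (real d + 1)^2 / (2 * real q)"
proof -
  have q: "real q \<ge> 2 * real d + 1" using assms by linarith
  have d: "real d \<ge> 1" using assms by simp
  have pos: "real q - real d > 0" "real q > 0" using q d by auto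
  have "2 * real d * real q \<le> (real d + 1)^2 * (real q - real d)"
  proof -
    have "(real d + 1)^2 * (real q - real d) - 2 * real d * real q = real q * (real d ^ 2 + 1) - real d * (real d + 1)^2"
      by (simp add: power2_eq_square algebra_simps)
    moreover have "real q * (real d ^ 2 + 1) \<ge> (2 * real d + 1) * (real d ^ 2 + 1)"
      using q by (intro mult_right_mono) auto
    moreover have "(2 * real d + 1) * (real d ^ 2 + 1) - real d * (real d + 1)^2 = real d ^ 3 - real d ^2 + real d + 1"
      by (simp add: power2_eq_square power3_eq_cube algebra_simps)
    moreover have "real d ^ 3 \<ge> real d ^ 2" using d by (simp add: power_increasing)
    ultimately show ?thesis using d by linarith
  qed
  thus ?thesis using pos by (simp add: divide_simps)
qed

lemma s_bound:
  fixes Q :: "nat set" and d :: nat and m :: "nat \<Rightarrow> real"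
  assumes fin: "finite Q" and ne: "Q \<noteq> {}" and pr: "\<forall>q\<in>Q. prime q" and d1: "d \<ge> 1"
    and mpos: "\<forall>q\<in>Q. m q > 0" and mq1: "\<forall>q\<in>Q. m q \<le> real q - 1" and mqd: "\<forall>q\<in>Q. m q \<le> real d"
  shows "(\<Sum>q\<in>Q. m q / (real q - m q)) \<le> (real d + 1)^2 * (2 + ln (ln (real (card Q) + 1)))"
proof -
  define y where "y q = m q / (real q - m q)" for q
  have yd: "y q \<le> real d" if "q \<in> Q" for q
  proof (cases "q \<le> d")
    case True
    have "y q \<le> real q - 1" unfolding y_def using y_le_q1 mpos mq1 that by auto
    thus ?thesis using True by linarith
  next
    case False
    hence "y q \<le> real d / (real q - real d)" unfolding y_def using y_le_dq mpos mqd that by auto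
    moreover have "real d / (real q - real d) \<le> real d" using False
      by (simp add: divide_le_eq) (simp add: mult_le_cancel_left1)
    ultimately show ?thesis by linarith
  qed
  let ?L = "ln (ln (real (card Q) + 1))"
  have n1: "card Q \<ge> 1" using fin ne by (simp add: Suc_leI card_gt_0_iff)
  show ?thesis
  proof (cases "card Q = 1")
    case True
    have "(\<Sum>q\<in>Q. y q) \<le> (\<Sum>q\<in>Q. real d)" by (rule sum_mono) (use yd in auto)
    also have "\<dots> = real d" using True by simp
    also have "\<dots> \<le> (real d + 1)^2 * (2 + ?L)"
    proof -
      have "exp (-1) \<le> (1/2::real)"
      proof -
        have "2 \<le> exp (1::real)" using exp_ge_add_one_self[of "1::real"] by simp
        thus ?thesis by (simp add: exp_minus field_simps)
      qed
      hence "exp (-1) \<le> ln (2::real)" using ln2_ge by linarith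
      hence "-1 \<le> ln (ln (2::real))" using ln2_ge by (subst ln_ge_iff) auto
      hence L: "?L \<ge> -1" using True by simp
      have "real d \<le> (real d + 1)^2" by (simp add: power2_eq_square algebra_simps)
      moreover have "(real d + 1)^2 \<le> (real d + 1)^2 * (2 + ?L)" using L by simp
      ultimately show ?thesis by linarith
    qed
    finally show ?thesis unfolding y_def .
  next
    case False
    hence n2: "card Q \<ge> 2" using n1 by simp
    define Q1 where "Q1 = {q\<in>Q. q \<le> d}"
    define Q2 where "Q2 = {q\<in>Q. d < q \<and> q \<le> 2*d}"
    define Q3 where "Q3 = {q\<in>Q. 2*d < q}"
    have fQ: "finite Q1" "finite Q2" "finite Q3" using fin by (auto simp: Q1_def Q2_def Q3_def)
    have split: "(\<Sum>q\<in>Q. y q) = (\<Sum>q\<in>Q1. y q) + (\<Sum>q\<in>Q2. y q) + (\<Sum>q\<in>Q3. y q)"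
    proof -
      have "Q = Q1 \<union> Q2 \<union> Q3" by (auto simp: Q1_def Q2_def Q3_def)
      moreover have "(\<Sum>q\<in>Q1 \<union> Q2 \<union> Q3. y q) = (\<Sum>q\<in>Q1 \<union> Q2. y q) + (\<Sum>q\<in>Q3. y q)"
        using fQ by (intro sum.union_disjoint) (auto simp: Q1_def Q2_def Q3_def)
      moreover have "(\<Sum>q\<in>Q1 \<union> Q2. y q) = (\<Sum>q\<in>Q1. y q) + (\<Sum>q\<in>Q2. y q)"
        using fQ by (intro sum.union_disjoint) (auto simp: Q1_def Q2_def Q3_def)
      ultimately show ?thesis by simp
    qed
    have s1: "(\<Sum>q\<in>Q1. y q) \<le> real d * (real d - 1) / 2"
    proof -
      have "(\<Sum>q\<in>Q1. y q) \<le> (\<Sum>q\<in>Q1. real q - 1)"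
        by (rule sum_mono) (use y_le_q1 mpos mq1 in \<open>auto simp: Q1_def y_def\<close>)
      also have "\<dots> \<le> (\<Sum>q\<in>{1..d}. real q - 1)"
      proof (rule sum_mono2)
        show "Q1 \<subseteq> {1..d}" using pr by (auto simp: Q1_def Suc_le_eq prime_gt_0_nat)
      qed auto
      finally show ?thesis using sum_q_minus_1[of d] by linarith
    qed
    have s2: "(\<Sum>q\<in>Q2. y q) \<le> real d * real d"
    proof -
      have "(\<Sum>q\<in>Q2. y q) \<le> (\<Sum>q\<in>Q2. real d)" by (rule sum_mono) (use yd in \<open>auto simp: Q2_def\<close>)
      also have "\<dots> = real (card Q2) * real d" by simp
      also have "\<dots> \<le> real d * real d"
      proof -
        have "card Q2 \<le> card {d<..2*d}" by (intro card_mono) (auto simp: Q2_def)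
        hence "card Q2 \<le> d" by simp
        thus ?thesis by (simp add: mult_right_mono)
      qed
      finally show ?thesis .
    qed
    have s3: "(\<Sum>q\<in>Q3. y q) \<le> (real d + 1)^2 / 2 * (1 + 2 * ?L)"
    proof -
      have "(\<Sum>q\<in>Q3. y q) \<le> (\<Sum>q\<in>Q3. (real d + 1)^2 / 2 * (1 / real q))"
      proof (rule sum_mono)
        fix q assume q: "q \<in> Q3"
        hence "y q \<le> real d / (real q - real d)" unfolding y_def using y_le_dq mpos mqd
          by (auto simp: Q3_def)
        also have "\<dots> \<le> (real d + 1)^2 / (2 * real q)" using y_le_big[of d q] q d1 by (auto simp: Q3_def)
        finally show "y q \<le> (real d + 1)^2 / 2 * (1 / real q)" by simp
      qed
      also have "\<dots> = (real d + 1)^2 / 2 * (\<Sum>q\<in>Q3. 1 / real q)" by (simp add: sum_distrib_left)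
      also have "\<dots> \<le> (real d + 1)^2 / 2 * (1 + 2 * ?L)"
      proof (rule mult_left_mono)
        have "\<forall>q\<in>Q3. prime q \<and> q \<ge> 3" using pr d1 by (auto simp: Q3_def)
        moreover have "card Q3 \<le> card Q" using fin by (intro card_mono) (auto simp: Q3_def)
        ultimately show "(\<Sum>q\<in>Q3. 1 / real q) \<le> 1 + 2 * ?L" using R_main[OF fQ(3) _ _ n2] by simp
      qed simp
      finally show ?thesis .
    qed
    have "(\<Sum>q\<in>Q. y q) \<le> real d * (real d - 1) / 2 + real d * real d + (real d + 1)^2 / 2 * (1 + 2 * ?L)"
      using split s1 s2 s3 by linarith
    also have "\<dots> \<le> (real d + 1)^2 * (2 + ?L)"
    proof -
      have "(real d + 1)^2 * (2 + ?L) - (real d * (real d - 1) / 2 + real d * real d + (real d + 1)^2 / 2 * (1 + 2 * ?L))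
            = (7 * real d + 3) / 2"
        by (simp add: power2_eq_square field_simps)
      thus ?thesis by simp
    qed
    finally show ?thesis unfolding y_def .
  qed
qed



lemma pow_over_fact_le_exp:
  fixes x :: real assumes "x \<ge> 0"
  shows "x ^ n / fact n \<le> exp x"
proof -
  have sm: "(\<lambda>i. x ^ i / fact i) sums exp x"
    using exp_converges[of x] by (simp add: divide_inverse mult.commute)
  have "(\<Sum>i\<in>{n}. x ^ i / fact i) \<le> (\<Sum>i. x ^ i / fact i)"
    by (rule sum_le_suminf) (use sm assms in \<open>auto simp: sums_iff\<close>)
  thus ?thesis using sm by (simp add: sums_iff)
qed

lemma bernoulli_like:
  fixes s y :: real assumes "s \<ge> 0" "y \<ge> 0"
  shows "s ^ Suc j + real (Suc j) * y * s ^ j \<le> (s + y) ^ Suc j"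
proof (induction j)
  case 0 thus ?case by simp
next
  case (Suc j)
  have "s ^ Suc (Suc j) + real (Suc (Suc j)) * y * s ^ Suc j
        \<le> (s + y) * (s ^ Suc j + real (Suc j) * y * s ^ j)"
  proof -
    have "(s + y) * (s ^ Suc j + real (Suc j) * y * s ^ j) =
          s ^ Suc (Suc j) + real (Suc (Suc j)) * y * s ^ Suc j + real (Suc j) * y * y * s ^ j"
      by (simp add: algebra_simps)
    moreover have "real (Suc j) * y * y * s ^ j \<ge> 0" using assms by simp
    ultimately show ?thesis by linarith
  qed
  also have "\<dots> \<le> (s + y) * (s + y) ^ Suc j"
    using Suc.IH assms by (intro mult_left_mono) auto
  finally show ?case by simp
qed

lemma sum_Pow_insert:
  assumes "finite A" "a \<notin> A"
  shows "(\<Sum>S\<in>Pow (insert a A). f S) = (\<Sum>S\<in>Pow A. f S) + (\<Sum>S\<in>Pow A. f (insert a S))"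
proof -
  have "(\<Sum>S\<in>Pow (insert a A). f S) = (\<Sum>S\<in>Pow A \<union> insert a ` Pow A. f S)"
    by (simp add: Pow_insert)
  also have "\<dots> = (\<Sum>S\<in>Pow A. f S) + (\<Sum>S\<in>insert a ` Pow A. f S)"
    using assms by (intro sum.union_disjoint) auto
  also have "(\<Sum>S\<in>insert a ` Pow A. f S) = (\<Sum>S\<in>Pow A. f (insert a S))"
  proof (rule sum.reindex[unfolded comp_def])
    show "inj_on (insert a) (Pow A)"
    proof (rule inj_onI)
      fix X Y assume "X \<in> Pow A" "Y \<in> Pow A" "insert a X = insert a Y"
      moreover hence "a \<notin> X" "a \<notin> Y" using assms by auto
      ultimately show "X = Y" by (metis Diff_insert_absorb)
    qed
  qed
  finally show ?thesis .
qed

definition FF :: "(nat \<Rightarrow> real) \<Rightarrow> nat set \<Rightarrow> nat \<Rightarrow> real" where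
  "FF x A k = (\<Sum>S\<in>Pow A. if card S < k then (-1) ^ card S * (\<Prod>q\<in>S. x q) else 0)"

definition GG :: "(nat \<Rightarrow> real) \<Rightarrow> nat set \<Rightarrow> nat \<Rightarrow> real" where
  "GG y A k = (\<Sum>T\<in>Pow A. (\<Prod>q\<in>T. y q) * real (card T choose k))"

lemma FF_empty: "FF x {} k = (if 0 < k then 1 else 0)"
  by (simp add: FF_def)

lemma GG_empty: "GG y {} k = (if k = 0 then 1 else 0)"
  by (simp add: GG_def)

lemma FF_insert:
  assumes "finite A" "a \<notin> A"
  shows "FF x (insert a A) (Suc k) = FF x A (Suc k) - x a * FF x A k"
proof -
  have "FF x (insert a A) (Suc k) = FF x A (Suc k) +
     (\<Sum>S\<in>Pow A. if card (insert a S) < Suc k then (-1) ^ card (insert a S) * (\<Prod>q\<in>insert a S. x q) else 0)"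
    unfolding FF_def by (rule sum_Pow_insert[OF assms])
  also have "(\<Sum>S\<in>Pow A. if card (insert a S) < Suc k then (-1) ^ card (insert a S) * (\<Prod>q\<in>insert a S. x q) else 0)
     = (\<Sum>S\<in>Pow A. - x a * (if card S < k then (-1) ^ card S * (\<Prod>q\<in>S. x q) else 0))"
  proof (rule sum.cong)
    fix S assume "S \<in> Pow A"
    hence S: "finite S" "a \<notin> S" using assms by (auto intro: finite_subset)
    thus "(if card (insert a S) < Suc k then (-1) ^ card (insert a S) * (\<Prod>q\<in>insert a S. x q) else 0) =
          - x a * (if card S < k then (-1) ^ card S * (\<Prod>q\<in>S. x q) else 0)"
      by simp
  qed simp
  also have "\<dots> = - x a * FF x A k" unfolding FF_def by (simp add: sum_distrib_left)
  finally show ?thesis by simp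
qed

lemma FF_0: "FF x A 0 = 0" by (simp add: FF_def)

lemma GG_insert_0:
  assumes "finite A" "a \<notin> A"
  shows "GG y (insert a A) 0 = (1 + y a) * GG y A 0"
proof -
  have "GG y (insert a A) 0 = GG y A 0 + (\<Sum>S\<in>Pow A. (\<Prod>q\<in>insert a S. y q) * real (card (insert a S) choose 0))"
    unfolding GG_def by (rule sum_Pow_insert[OF assms])
  also have "(\<Sum>S\<in>Pow A. (\<Prod>q\<in>insert a S. y q) * real (card (insert a S) choose 0)) = y a * GG y A 0"
    unfolding GG_def sum_distrib_left
  proof (rule sum.cong)
    fix S assume "S \<in> Pow A"
    hence S: "finite S" "a \<notin> S" using assms by (auto intro: finite_subset)
    thus "(\<Prod>q\<in>insert a S. y q) * real (card (insert a S) choose 0) = y a * ((\<Prod>q\<in>S. y q) * real (card S choose 0))"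
      by simp
  qed simp
  finally show ?thesis by (simp add: algebra_simps)
qed

lemma GG_insert_Suc:
  assumes "finite A" "a \<notin> A"
  shows "GG y (insert a A) (Suc k) = GG y A (Suc k) + y a * (GG y A (Suc k) + GG y A k)"
proof -
  have "GG y (insert a A) (Suc k) = GG y A (Suc k) + (\<Sum>S\<in>Pow A. (\<Prod>q\<in>insert a S. y q) * real (card (insert a S) choose Suc k))"
    unfolding GG_def by (rule sum_Pow_insert[OF assms])
  also have "(\<Sum>S\<in>Pow A. (\<Prod>q\<in>insert a S. y q) * real (card (insert a S) choose Suc k)) = y a * (GG y A (Suc k) + GG y A k)"
    unfolding GG_def sum_distrib_left sum.distrib[symmetric]
  proof (rule sum.cong)
    fix S assume "S \<in> Pow A"
    hence S: "finite S" "a \<notin> S" using assms by (auto intro: finite_subset)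
    thus "(\<Prod>q\<in>insert a S. y q) * real (card (insert a S) choose Suc k) =
          y a * ((\<Prod>q\<in>S. y q) * real (card S choose Suc k) + (\<Prod>q\<in>S. y q) * real (card S choose k))"
      by (simp add: algebra_simps)
  qed simp
  finally show ?thesis .
qed

lemma FF_invariant:
  assumes "finite A" "\<forall>q\<in>A. 0 \<le> x q \<and> x q < 1 \<and> (1 - x q) * (1 + y q) = 1 \<and> (1 - x q) * y q = x q"
  shows "0 \<le> (-1)^(k+1) * (FF x A k - (\<Prod>q\<in>A. 1 - x q)) \<and>
         (-1)^(k+1) * (FF x A k - (\<Prod>q\<in>A. 1 - x q)) \<le> (\<Prod>q\<in>A. 1 - x q) * GG y A k"
  using assms
proof (induction A arbitrary: k rule: finite_induct)
  case empty
  show ?case by (cases k) (auto simp: FF_empty GG_empty)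
next
  case (insert a A)
  let ?W = "\<Prod>q\<in>A. 1 - x q"
  have xa: "0 \<le> x a" "x a < 1" using insert.prems by auto
  have IH: "\<And>k. 0 \<le> (-1)^(k+1) * (FF x A k - ?W) \<and> (-1)^(k+1) * (FF x A k - ?W) \<le> ?W * GG y A k"
    using insert.IH insert.prems by auto
  have W0: "?W \<ge> 0" using insert.prems by (intro prod_nonneg) auto
  have Wins: "(\<Prod>q\<in>insert a A. 1 - x q) = (1 - x a) * ?W" using insert.hyps by simp
  have id1: "(1 - x a) * (1 + y a) = 1" using insert.prems by auto
  have id2: "(1 - x a) * y a = x a" using insert.prems by auto
  show ?case
  proof (cases k)
    case 0
    have "(\<Prod>q\<in>insert a A. 1 - x q) * GG y (insert a A) 0 = ?W * GG y A 0 * ((1 - x a) * (1 + y a))"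
      using insert.hyps by (simp add: GG_insert_0 Wins mult_ac)
    also have "\<dots> = ?W * GG y A 0" using id1 by simp
    finally have e: "(\<Prod>q\<in>insert a A. 1 - x q) * GG y (insert a A) 0 = ?W * GG y A 0" .
    have "?W \<le> ?W * GG y A 0" using IH[of 0] by (simp add: FF_0)
    moreover have "(1 - x a) * ?W \<le> ?W" using xa W0 by (simp add: mult_left_le_one_le)
    moreover have "(1 - x a) * ?W \<ge> 0" using xa W0 by simp
    moreover have "(-1)^(k+1) * (FF x (insert a A) k - (\<Prod>q\<in>insert a A. 1 - x q)) = (1 - x a) * ?W"
      using 0 by (simp add: FF_0 Wins)
    moreover have "(\<Prod>q\<in>insert a A. 1 - x q) * GG y (insert a A) k = ?W * GG y A 0" using e 0 by simp
    ultimately show ?thesis by (simp only:) (simp add: W0 xa)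
  next
    case (Suc j)
    define D1 where "D1 = (-1)^(j+1+1) * (FF x A (Suc j) - ?W)"
    define D0 where "D0 = (-1)^(j+1) * (FF x A j - ?W)"
    have D1b: "0 \<le> D1" "D1 \<le> ?W * GG y A (Suc j)" using IH[of "Suc j"] by (simp_all add: D1_def)
    have D0b: "0 \<le> D0" "D0 \<le> ?W * GG y A j" using IH[of j] by (simp_all add: D0_def)
    have eq: "(-1)^(k+1) * (FF x (insert a A) k - (\<Prod>q\<in>insert a A. 1 - x q)) = D1 + x a * D0"
    proof -
      have "FF x (insert a A) k = FF x A (Suc j) - x a * FF x A j"
        using insert.hyps by (simp add: Suc FF_insert)
      moreover obtain sg :: real where sg: "(-1::real)^(j+1) = sg" by blast
      moreover have "(-1::real)^(k+1) = - sg" using sg by (simp add: Suc)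
      moreover have "(-1::real)^(j+1+1) = - sg" using sg by simp
      ultimately show ?thesis unfolding D1_def D0_def Wins by (simp only:) (simp add: algebra_simps)
    qed
    have eq2: "(\<Prod>q\<in>insert a A. 1 - x q) * GG y (insert a A) k = ?W * GG y A (Suc j) + x a * (?W * GG y A j)"
    proof -
      have "(\<Prod>q\<in>insert a A. 1 - x q) * GG y (insert a A) k =
            ?W * (GG y A (Suc j) * ((1 - x a) * (1 + y a)) + GG y A j * ((1 - x a) * y a))"
        using insert.hyps by (simp add: Suc GG_insert_Suc Wins algebra_simps)
      thus ?thesis by (simp only: id1 id2) (simp add: algebra_simps)
    qed
    have "0 \<le> D1 + x a * D0" using D1b D0b xa by simp
    moreover have "D1 + x a * D0 \<le> ?W * GG y A (Suc j) + x a * (?W * GG y A j)"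
      using D1b D0b xa by (intro add_mono mult_left_mono) auto
    ultimately show ?thesis using eq eq2 by simp
  qed
qed

lemma helper_alg:
  fixes f E s P y n :: real assumes "f > 0" "n \<ge> 0"
  shows "(1+y)*(E*(s*P)/((n+1)*f)) + y*(E*P/f) = E*((1+y)*(s*P) + (n+1)*y*P)/((n+1)*f)"
proof -
  have n1: "n + 1 \<noteq> 0" using assms by simp
  have "E*((1+y)*(s*P) + (n+1)*y*P)/((n+1)*f) = (1+y)*(E*(s*P))/((n+1)*f) + ((n+1)*(y*(E*P)))/((n+1)*f)"
    by (simp add: add_divide_distrib[symmetric] algebra_simps)
  also have "((n+1)*(y*(E*P)))/((n+1)*f) = y*(E*P)/f" using n1 by simp
  finally show ?thesis by simp
qed

lemma GG_nonneg: "\<forall>q\<in>A. 0 \<le> y q \<Longrightarrow> GG y A k \<ge> 0"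
  unfolding GG_def by (intro sum_nonneg mult_nonneg_nonneg prod_nonneg) auto

lemma GG_bound:
  assumes "finite A" "\<forall>q\<in>A. 0 \<le> y q"
  shows "GG y A k \<le> exp (\<Sum>q\<in>A. y q) * (\<Sum>q\<in>A. y q) ^ k / fact k"
  using assms
proof (induction A arbitrary: k rule: finite_induct)
  case empty
  show ?case by (cases k) (auto simp: GG_empty)
next
  case (insert a A)
  let ?s = "\<Sum>q\<in>A. y q"
  have ya: "y a \<ge> 0" using insert.prems by auto
  have s0: "?s \<ge> 0" using insert.prems by (intro sum_nonneg) auto
  have IH: "\<And>k. GG y A k \<le> exp ?s * ?s ^ k / fact k" using insert.IH insert.prems by auto
  have sins: "(\<Sum>q\<in>insert a A. y q) = ?s + y a" using insert.hyps by simp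
  have ey: "1 + y a \<le> exp (y a)" by simp
  show ?case
  proof (cases k)
    case 0
    have "GG y (insert a A) 0 = (1 + y a) * GG y A 0" using insert.hyps by (simp add: GG_insert_0)
    also have "\<dots> \<le> exp (y a) * exp ?s"
      using IH[of 0] ya GG_nonneg[of A y 0] insert.prems by (intro mult_mono) (auto intro: order_trans[OF _ ey])
    also have "\<dots> = exp (\<Sum>q\<in>insert a A. y q)" by (simp add: sins exp_add)
    finally show ?thesis using 0 by simp
  next
    case (Suc j)
    have "GG y (insert a A) k = (1 + y a) * GG y A (Suc j) + y a * GG y A j"
      using insert.hyps by (simp add: Suc GG_insert_Suc algebra_simps)
    also have "\<dots> \<le> (1 + y a) * (exp ?s * ?s ^ Suc j / fact (Suc j)) + y a * (exp ?s * ?s ^ j / fact j)"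
      using IH[of j] IH[of "Suc j"] ya by (intro add_mono mult_left_mono) auto
    also have "\<dots> = exp ?s * ((1 + y a) * ?s ^ Suc j + real (Suc j) * y a * ?s ^ j) / fact (Suc j)"
    proof -
      have f: "fact (Suc j) = (real j + 1) * fact j" by (simp add: fact_Suc)
      have "?s ^ Suc j = ?s * ?s ^ j" by simp
      thus ?thesis unfolding f using fact_gt_zero[of j] helper_alg[of "fact j" "real j" "y a" "exp ?s" ?s "?s ^ j"]
        by (simp add: add.commute)
    qed
    also have "\<dots> \<le> exp ?s * (exp (y a) * (?s + y a) ^ Suc j) / fact (Suc j)"
    proof -
      have "(1 + y a) * ?s ^ Suc j + real (Suc j) * y a * ?s ^ j \<le> (1 + y a) * (?s ^ Suc j + real (Suc j) * y a * ?s ^ j)"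
        using ya s0 by (simp add: algebra_simps)
      also have "\<dots> \<le> exp (y a) * (?s + y a) ^ Suc j"
        using bernoulli_like[OF s0 ya, of j] ey ya s0 by (intro mult_mono) auto
      finally show ?thesis by (intro divide_right_mono mult_left_mono) auto
    qed
    also have "\<dots> = exp (\<Sum>q\<in>insert a A. y q) * (\<Sum>q\<in>insert a A. y q) ^ k / fact k"
      using Suc by (simp add: sins exp_add algebra_simps)
    finally show ?thesis .
  qed
qed

lemma final_ineq:
  fixes x :: "nat \<Rightarrow> real" and l :: nat and \<alpha> :: real
  assumes fin: "finite Q" and xr: "\<forall>q\<in>Q. 0 \<le> x q \<and> x q < 1" and lodd: "odd l" and l0: "l > 0"
    and sa: "(\<Sum>q\<in>Q. x q / (1 - x q)) \<le> \<alpha>"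
  shows "FF x Q (l+1) \<ge> (\<Prod>q\<in>Q. 1 - x q) * (1 - (exp 1 * \<alpha> / real l) ^ l * \<alpha> * exp \<alpha>)"
proof -
  define y where "y q = x q / (1 - x q)" for q
  define W where "W = (\<Prod>q\<in>Q. 1 - x q)"
  define s where "s = (\<Sum>q\<in>Q. y q)"
  have yprops: "\<forall>q\<in>Q. 0 \<le> x q \<and> x q < 1 \<and> (1 - x q) * (1 + y q) = 1 \<and> (1 - x q) * y q = x q"
    using xr by (auto simp: y_def field_simps)
  have y0: "\<forall>q\<in>Q. 0 \<le> y q" using xr by (auto simp: y_def)
  have s0: "s \<ge> 0" unfolding s_def using y0 by (intro sum_nonneg) auto
  have sa': "s \<le> \<alpha>" using sa by (simp add: s_def y_def)
  have W0: "W \<ge> 0" unfolding W_def using xr by (intro prod_nonneg) auto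
  have inv: "(-1)^(l+1+1) * (FF x Q (l+1) - W) \<le> W * GG y Q (l+1)"
    using FF_invariant[OF fin yprops, of "l+1"] by (simp add: W_def)
  have "(-1::real)^(l+1+1) = -1" using lodd by simp
  hence F1: "W - FF x Q (l+1) \<le> W * GG y Q (l+1)" using inv by simp
  define h where "h t = (exp 1 * t / real l) ^ l * t * exp t" for t :: real
  have GGh: "GG y Q (l+1) \<le> h s"
  proof -
    have "GG y Q (l+1) \<le> exp s * s ^ (l+1) / fact (l+1)"
      using GG_bound[OF fin y0, of "l+1"] by (simp add: s_def)
    also have "\<dots> \<le> exp s * s ^ (l+1) / fact l"
      using s0 by (intro divide_left_mono) (auto simp: fact_mono)
    also have "\<dots> = exp s * s * (s ^ l / fact l)" by (simp add: field_simps)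
    also have "\<dots> \<le> exp s * s * (exp 1 * s / real l) ^ l"
    proof (rule mult_left_mono)
      have lp: "real l > 0" using l0 by simp
      have "real l ^ l / fact l \<le> exp (real l)" by (rule pow_over_fact_le_exp) simp
      also have "exp (real l) = exp 1 ^ l" by (simp add: exp_of_nat_mult[symmetric])
      finally have e: "real l ^ l / fact l \<le> exp 1 ^ l" .
      have "s ^ l / fact l = (s / real l) ^ l * (real l ^ l / fact l)"
        using lp by (simp add: power_divide)
      also have "\<dots> \<le> (s / real l) ^ l * exp 1 ^ l"
        using e s0 lp by (intro mult_left_mono) auto
      also have "\<dots> = (exp 1 * s / real l) ^ l" by (simp add: power_mult_distrib[symmetric] mult.commute)
      finally show "s ^ l / fact l \<le> (exp 1 * s / real l) ^ l" .
    qed (use s0 in simp)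
    finally show ?thesis by (simp add: h_def mult_ac)
  qed
  have hmono: "h s \<le> h \<alpha>"
    unfolding h_def using s0 sa' by (intro mult_mono power_mono divide_right_mono) auto
  have "W - FF x Q (l+1) \<le> W * h \<alpha>"
    using F1 GGh hmono W0 by (meson mult_left_mono order_trans)
  thus ?thesis by (simp add: W_def h_def algebra_simps)
qed



lemma prime_factors_prod_primes:
  fixes S :: "nat set"
  assumes "finite S" "\<forall>p\<in>S. prime p"
  shows "prime_factors (\<Prod>S) = S"
proof -
  have "prime_factors (prod id S) = \<Union>((prime_factors \<circ> id) ` S)"
    using assms by (intro prime_factors_prod) auto
  also have "\<dots> = S" using assms by (auto simp: prime_prime_factors)
  finally show ?thesis by simp
qed

lemma squarefree_prod_primes:
  fixes S :: "nat set"
  assumes "finite S" "\<forall>p\<in>S. prime p"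
  shows "squarefree (\<Prod>S)"
proof -
  have "squarefree (prod id S)"
    using assms by (intro squarefree_prod_coprime) (auto simp: primes_coprime squarefree_prime)
  thus ?thesis by simp
qed

lemma mult_prod_primes:
  fixes S :: "nat set"
  assumes "finite S" "\<forall>p\<in>S. prime p" "multiplicative m" "\<forall>n>0. m n > 0"
  shows "m (\<Prod>S) = (\<Prod>q\<in>S. m q)"
  using assms(1,2)
proof (induction S rule: finite_induct)
  case empty
  have mm: "\<forall>a b. 0 < a \<longrightarrow> 0 < b \<longrightarrow> coprime a b \<longrightarrow> m (a * b) = m a * m b" using assms(3) unfolding multiplicative_def .
  have "m (1 * 1) = m 1 * m 1" using mm[rule_format, of 1 1] by simp
  moreover have "m 1 > 0" using assms(4) by auto
  ultimately show ?case by simp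
next
  case (insert a S)
  have "coprime a (\<Prod>S)"
    using insert by (intro prod_coprime_right) (auto intro: primes_coprime)
  moreover have "a > 0" "\<Prod>S > 0" using insert by (auto simp: prime_gt_0_nat)
  ultimately have "m (a * \<Prod>S) = m a * m (\<Prod>S)" using assms(3) unfolding multiplicative_def by auto
  thus ?case using insert by simp
qed

lemma divisor_set_eq:
  fixes Q :: "nat set"
  assumes fin: "finite Q" and pr: "\<forall>q\<in>Q. prime q"
  shows "{r. r dvd (\<Prod>q\<in>Q. q) \<and> omega r \<le> l} = Prod ` {S\<in>Pow Q. card S \<le> l}"
proof (intro equalityI subsetI)
  fix r assume "r \<in> {r. r dvd (\<Prod>q\<in>Q. q) \<and> omega r \<le> l}"
  hence rd: "r dvd \<Prod>Q" and ro: "omega r \<le> l" by auto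
  have P0: "\<Prod>Q \<noteq> (0::nat)" using fin pr by (auto simp: prime_gt_0_nat)
  hence r0: "r \<noteq> 0" using rd by auto
  have sub: "prime_factors r \<subseteq> Q"
  proof
    fix p assume p: "p \<in> prime_factors r"
    hence pp: "prime p" and "p dvd r" using r0 by (auto simp: prime_factors_dvd)
    hence "p dvd prod id Q" using rd by (auto intro: dvd_trans)
    then obtain q where "q \<in> Q" "p dvd q" using fin pp by (auto simp: prime_dvd_prod_iff)
    moreover hence "p = q" using pr pp by (simp add: primes_dvd_imp_eq)
    ultimately show "p \<in> Q" by simp
  qed
  have sqP: "squarefree (\<Prod>Q)" by (rule squarefree_prod_primes[OF fin pr])
  have sqr: "squarefree r" by (rule squarefree_mono[OF rd sqP])
  have "(\<Prod>p\<in>prime_factors r. p ^ multiplicity p r) = normalize r" by (rule prod_prime_factors[OF r0])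
  moreover have "\<forall>p\<in>prime_factors r. multiplicity p r = 1" using sqr r0 by (simp add: squarefree_factorial_semiring')
  ultimately have "r = \<Prod>(prime_factors r)" by simp
  moreover have "card (prime_factors r) \<le> l" using ro by (simp add: omega_def)
  ultimately show "r \<in> Prod ` {S\<in>Pow Q. card S \<le> l}" using sub by blast
next
  fix r assume "r \<in> Prod ` {S\<in>Pow Q. card S \<le> l}"
  then obtain S where S: "S \<subseteq> Q" "card S \<le> l" and r: "r = \<Prod>S" by auto
  have fS: "finite S" using S fin by (auto intro: finite_subset)
  have prS: "\<forall>p\<in>S. prime p" using S pr by auto
  have "r dvd \<Prod>Q" unfolding r using S fin by (intro prod_dvd_prod_subset)
  moreover have "omega r = card S" unfolding r omega_def using prime_factors_prod_primes[OF fS prS] by simp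
  ultimately show "r \<in> {r. r dvd (\<Prod>q\<in>Q. q) \<and> omega r \<le> l}" using S by simp
qed

theorem mainTheorem4:
  fixes Q :: "nat set" and d :: nat and l :: nat and m :: "nat \<Rightarrow> real"
  assumes "finite Q" and "Q \<noteq> {}" and "\<forall>q\<in>Q. prime q"
    and "d \<ge> 1" and "l > 0" and "odd l"
    and "\<forall>n>0. m n > 0" and "multiplicative m"
    and "\<forall>q\<in>Q. m q \<le> real q - 1" and "\<forall>q\<in>Q. m q \<le> real d"
  shows "(let \<alpha> = (real d + 1)^2 * (2 + ln (ln (real (card Q) + 1)))
          in (\<Sum>r\<in>{r. r dvd (\<Prod>q\<in>Q. q) \<and> omega r \<le> l}. real_of_int (moebius r) * m r / real r)
             \<ge> (\<Prod>q\<in>Q. 1 - m q / real q) * (1 - (exp 1 * \<alpha> / real l) ^ l * \<alpha> * exp \<alpha>))"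
proof -
  note fin = assms(1) and ne = assms(2) and pr = assms(3) and d1 = assms(4) and l0 = assms(5)
    and lodd = assms(6) and mpos = assms(7) and mult = assms(8) and mq1 = assms(9) and mqd = assms(10)
  define \<alpha> where "\<alpha> = (real d + 1)^2 * (2 + ln (ln (real (card Q) + 1)))"
  define x where "x q = m q / real q" for q
  have qpos: "\<forall>q\<in>Q. q > 0" using pr by (auto simp: prime_gt_0_nat)
  have mQ: "\<forall>q\<in>Q. m q > 0" using mpos qpos by auto
  have xr: "\<forall>q\<in>Q. 0 \<le> x q \<and> x q < 1"
  proof
    fix q assume q: "q \<in> Q"
    have "real q > 0" using qpos q by simp
    moreover have "m q < real q" using mq1 q by force
    ultimately show "0 \<le> x q \<and> x q < 1" using mQ q by (auto simp: x_def divide_less_eq)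
  qed
  have seq: "(\<Sum>q\<in>Q. x q / (1 - x q)) = (\<Sum>q\<in>Q. m q / (real q - m q))"
  proof (rule sum.cong)
    fix q assume q: "q \<in> Q"
    have "real q > 0" using qpos q by simp
    thus "x q / (1 - x q) = m q / (real q - m q)" by (simp add: x_def field_simps)
  qed simp
  have sb: "(\<Sum>q\<in>Q. x q / (1 - x q)) \<le> \<alpha>"
    unfolding seq \<alpha>_def by (rule s_bound[OF fin ne pr d1 mQ mq1 mqd])
  have fi: "FF x Q (l+1) \<ge> (\<Prod>q\<in>Q. 1 - x q) * (1 - (exp 1 * \<alpha> / real l) ^ l * \<alpha> * exp \<alpha>)"
    by (rule final_ineq[OF fin xr lodd l0 sb])
  define SS where "SS = {S\<in>Pow Q. card S \<le> l}"
  have injP: "inj_on Prod SS"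
    by (rule inj_on_Prod_primes) (use pr fin in \<open>auto simp: SS_def intro: finite_subset\<close>)
  have lhs: "(\<Sum>r\<in>{r. r dvd (\<Prod>q\<in>Q. q) \<and> omega r \<le> l}. real_of_int (moebius r) * m r / real r) = FF x Q (l+1)"
  proof -
    have "(\<Sum>r\<in>{r. r dvd (\<Prod>q\<in>Q. q) \<and> omega r \<le> l}. real_of_int (moebius r) * m r / real r)
          = (\<Sum>r\<in>Prod ` SS. real_of_int (moebius r) * m r / real r)"
      by (simp add: divisor_set_eq[OF fin pr] SS_def)
    also have "\<dots> = (\<Sum>S\<in>SS. real_of_int (moebius (\<Prod>S)) * m (\<Prod>S) / real (\<Prod>S))"
      by (rule sum.reindex[OF injP, unfolded comp_def])
    also have "\<dots> = (\<Sum>S\<in>SS. (-1) ^ card S * (\<Prod>q\<in>S. x q))"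
    proof (rule sum.cong)
      fix S assume "S \<in> SS"
      hence S: "S \<subseteq> Q" by (auto simp: SS_def)
      have fS: "finite S" using S fin by (auto intro: finite_subset)
      have prS: "\<forall>p\<in>S. prime p" using S pr by auto
      have mu: "moebius (\<Prod>S) = (-1) ^ card S"
        unfolding moebius_def omega_def
        using squarefree_prod_primes[OF fS prS] prime_factors_prod_primes[OF fS prS] by simp
      have mS: "m (\<Prod>S) = (\<Prod>q\<in>S. m q)" by (rule mult_prod_primes[OF fS prS mult mpos])
      have rS: "real (\<Prod>S) = (\<Prod>q\<in>S. real q)" by simp
      show "real_of_int (moebius (\<Prod>S)) * m (\<Prod>S) / real (\<Prod>S) = (-1) ^ card S * (\<Prod>q\<in>S. x q)"
        unfolding mu mS rS x_def by (simp add: prod_dividef)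
    qed simp
    also have "\<dots> = FF x Q (l+1)"
    proof -
      have "FF x Q (l+1) = (\<Sum>S\<in>{S\<in>Pow Q. card S < l+1}. (-1) ^ card S * (\<Prod>q\<in>S. x q))"
        unfolding FF_def by (rule sum.inter_filter[symmetric]) (use fin in simp)
      moreover have "{S\<in>Pow Q. card S < l+1} = SS" by (auto simp: SS_def)
      ultimately show ?thesis by simp
    qed
    finally show ?thesis .
  qed
  show ?thesis unfolding Let_def lhs \<alpha>_def[symmetric] using fi by (simp add: x_def)
qed


end
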